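(* Let $\omega=\omega_0\omega_1\cdots$ be an infinite sequence over $\{b,c,d\}$ and let $n\ge1$ be such that $\omega_{n-1}=d$. Then in $G_\omega$ (indeed in $\mathrm{Aut}(\mathbf{T})$) we have $(a d_k)^{2^{n-k+1}}=1$ for every $0\le k<n$.
   Context: Let $\mathbf{T}=\{0,1\}^*$ be the rooted binary tree of finite binary strings, and $a$ the automorphism flipping the first bit of a string ($a$ fixes the empty string). For an infinite sequence $\omega$ over $\{b,c,d\}$, each $x\in\{b,c,d\}$ and each $n\ge0$, the automorphism $x_n$ is defined by $x_n(1^j)=1^j$ for all $j\ge0$, and $x_n(1^j0s)=1^j0s$ if $\omega_{n+j}=x$, $x_n(1^j0s)=1^j0a(s)$ if $\omega_{n+j}\ne x$, for all $j\ge0$ and strings $s$. In particular $d_k$ denotes the element $x_k$ for $x=d$. The generalized Grigorchuk group is $G_\omega=\langle a,b_0,c_0,d_0\rangle$. *)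

theory Defs
  imports Main
begin

text \<open>Vertices of the rooted binary tree are finite binary strings (bool lists,
  True = 1, False = 0, head = first bit). Tree automorphisms are functions on them;
  the group product is function composition.\<close>

datatype letter = B | C | D

definition a_aut :: "bool list \<Rightarrow> bool list" where
  "a_aut s = (case s of [] \<Rightarrow> [] | x # t \<Rightarrow> (\<not> x) # t)"

fun gen_aut :: "(nat \<Rightarrow> letter) \<Rightarrow> letter \<Rightarrow> nat \<Rightarrow> bool list \<Rightarrow> bool list" where
  "gen_aut w x n [] = []"
| "gen_aut w x n (True # s) = True # gen_aut w x (Suc n) s"
| "gen_aut w x n (False # s) = False # (if w n = x then s else a_aut s)"

end

theory Submission
  imports Defs
begin

lemma a_inv[simp]: "a_aut (a_aut s) = s"
  by (cases s) (auto simp: a_aut_def)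

lemma g_inv[simp]: "gen_aut w x n (gen_aut w x n s) = s"
  by (induction w x n s rule: gen_aut.induct) auto

lemma g_even: "(gen_aut w x n ^^ (2*j)) s = s"
proof -
  have "(gen_aut w x n ^^ 2) = id" by (rule ext) (simp add: numeral_2_eq_2)
  hence "gen_aut w x n ^^ (2*j) = id"
  proof -
    have "gen_aut w x n ^^ (2*j) = (gen_aut w x n ^^ 2) ^^ j" by (simp add: funpow_mult mult.commute)
    also have "... = id" using \<open>_ = id\<close> by (induction j) auto
    finally show ?thesis .
  qed
  thus ?thesis by simp
qed

lemma conj_pow: "((g \<circ> a_aut) ^^ m) s = a_aut (((a_aut \<circ> g) ^^ m) (a_aut s))"
  by (induction m arbitrary: s) auto

definition phi :: "(nat \<Rightarrow> letter) \<Rightarrow> nat \<Rightarrow> bool list \<Rightarrow> bool list" where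
  "phi w k = (if w k = D then id else a_aut)"

lemma sq:
  "((a_aut \<circ> gen_aut w D k) ^^ 2) (False # s) = False # gen_aut w D (Suc k) (phi w k s)"
  "((a_aut \<circ> gen_aut w D k) ^^ 2) (True # s) = True # phi w k (gen_aut w D (Suc k) s)"
  by (auto simp: numeral_2_eq_2 a_aut_def phi_def)

lemma sq_nil: "((a_aut \<circ> gen_aut w D k) ^^ j) [] = []"
  by (induction j) (auto simp: a_aut_def)

lemma pow2m:
  "((a_aut \<circ> gen_aut w D k) ^^ (2*m)) (False # s) = False # ((gen_aut w D (Suc k) \<circ> phi w k) ^^ m) s"
  "((a_aut \<circ> gen_aut w D k) ^^ (2*m)) (True # s) = True # ((phi w k \<circ> gen_aut w D (Suc k)) ^^ m) s"
proof -
  have e: "(a_aut \<circ> gen_aut w D k) ^^ (2*m) = ((a_aut \<circ> gen_aut w D k) ^^ 2) ^^ m"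
    by (simp add: funpow_mult mult.commute)
  show "((a_aut \<circ> gen_aut w D k) ^^ (2*m)) (False # s) = False # ((gen_aut w D (Suc k) \<circ> phi w k) ^^ m) s"
    unfolding e by (induction m arbitrary: s) (auto simp: sq)
  show "((a_aut \<circ> gen_aut w D k) ^^ (2*m)) (True # s) = True # ((phi w k \<circ> gen_aut w D (Suc k)) ^^ m) s"
    unfolding e by (induction m arbitrary: s) (auto simp: sq)
qed

lemma main:
  assumes "w (n - 1) = D"
  shows "k < n \<Longrightarrow> (a_aut \<circ> gen_aut w D k) ^^ (2 ^ (n - k + 1)) = id"
proof (induction "n - k" arbitrary: k rule: less_induct)
  case less
  define m where "m = (2::nat) ^ (n - k)"
  have N: "(2::nat) ^ (n - k + 1) = 2 * m" by (simp add: m_def)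
  have ev: "\<exists>j. m = 2 * j"
  proof -
    have "n - k \<ge> 1" using less by simp
    then obtain t where "n - k = Suc t" by (cases "n-k") auto
    thus ?thesis by (simp add: m_def)
  qed
  then obtain j where j: "m = 2*j" by blast
  have key: "\<And>s. ((gen_aut w D (Suc k) \<circ> phi w k) ^^ m) s = s \<and> ((phi w k \<circ> gen_aut w D (Suc k)) ^^ m) s = s"
  proof (cases "w k = D")
    case True
    then show "\<And>s. ?thesis s" by (simp add: phi_def j g_even)
  next
    case False
    with assms less have "Suc k < n" by (cases "Suc k = n") auto
    with less have IH: "(a_aut \<circ> gen_aut w D (Suc k)) ^^ (2 ^ (n - Suc k + 1)) = id" by auto
    have "n - Suc k + 1 = n - k" using \<open>Suc k < n\<close> by simp
    with IH have IH': "(a_aut \<circ> gen_aut w D (Suc k)) ^^ m = id" unfolding m_def by metis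
    show "\<And>s. ?thesis s" using False by (simp add: phi_def conj_pow IH')
  qed
  show ?case
  proof (rule ext)
    fix s show "((a_aut \<circ> gen_aut w D k) ^^ (2 ^ (n - k + 1))) s = id s"
      unfolding N by (cases s rule: list.exhaust) (auto simp: sq_nil, case_tac x21, auto simp: pow2m key)
  qed
qed

theorem lemma6p2:
  fixes w :: "nat \<Rightarrow> letter" and n k :: nat
  assumes "n \<ge> 1" and "w (n - 1) = D" and "k < n"
  shows "(a_aut \<circ> gen_aut w D k) ^^ (2 ^ (n - k + 1)) = id"
  using main[of w n k] assms by blast

end
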